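(* Let $F\subset\mathrm{Sym}^2(\mathbb{R}^n)$ be a cone subequation and $p\ge1$. Then the Riesz kernel $K_p$ is $F$-harmonic on $\mathbb{R}^n\setminus\{0\}$ if and only if $P_{e^\perp}-(p-1)P_e\in\partial F$ for every unit vector $e\in\mathbb{R}^n$.
   Context: A cone subequation is a closed $F\subset\mathrm{Sym}^2(\mathbb{R}^n)$ with $A\in F,P\ge0\Rightarrow A+P\in F$ and $tF=F$ for $t>0$; $\tilde F=\{A:-A\notin\mathrm{Int}F\}$. $F$-harmonic on an open set: finite, continuous, $F$-subharmonic and $-u$ is $\tilde F$-subharmonic, where $G$-subharmonic means upper semicontinuous with $D^2\phi(y)\in G$ for every $C^2$ test function $\phi$ at $y$ ($u\le\phi$ near $y$, equality at $y$). $P_e,P_{e^\perp}$ are orthogonal projections onto $\mathbb{R}e$ and $e^\perp$; $\partial F$ is the topological boundary of $F$. The Riesz kernel is $K_p(x)=-\frac{1}{p-2}|x|^{2-p}$ for $p\neq2$ and $K_2(x)=\log|x|$. *)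

theory Defs
  imports "HOL-Analysis.Analysis"
begin

definition Sym :: "(real^'n^'n) set" where
  "Sym = {A. transpose A = A}"

definition psd :: "real^'n^'n \<Rightarrow> bool" where
  "psd P \<longleftrightarrow> P \<in> Sym \<and> (\<forall>x. 0 \<le> x \<bullet> (P *v x))"

definition cone_subequation :: "(real^'n^'n) set \<Rightarrow> bool" where
  "cone_subequation F \<longleftrightarrow> F \<subseteq> Sym \<and> closed F
     \<and> (\<forall>A\<in>F. \<forall>P. psd P \<longrightarrow> A + P \<in> F)
     \<and> (\<forall>t::real. t > 0 \<longrightarrow> (\<lambda>A. t *\<^sub>R A) ` F = F)"

definition dual_subeq :: "(real^'n^'n) set \<Rightarrow> (real^'n^'n) set" where
  "dual_subeq F = {A \<in> Sym. - A \<notin> (top_of_set Sym) interior_of F}"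

definition C2_test_at :: "(real^'n \<Rightarrow> real) \<Rightarrow> real^'n \<Rightarrow> real^'n^'n \<Rightarrow> bool" where
  "C2_test_at phi y H \<longleftrightarrow> (\<exists>r>0. \<exists>g Hf.
      (\<forall>x\<in>ball y r. (phi has_derivative (\<lambda>h. g x \<bullet> h)) (at x)
                   \<and> (g has_derivative (\<lambda>h. Hf x *v h)) (at x))
      \<and> continuous_on (ball y r) Hf \<and> H = Hf y)"

definition usc_on :: "(real^'n) set \<Rightarrow> (real^'n \<Rightarrow> real) \<Rightarrow> bool" where
  "usc_on X u \<longleftrightarrow> (\<forall>y\<in>X. \<forall>c. u y < c \<longrightarrow> eventually (\<lambda>x. u x < c) (at y within X))"

definition subharmonic_on ::
  "(real^'n^'n) set \<Rightarrow> (real^'n) set \<Rightarrow> (real^'n \<Rightarrow> real) \<Rightarrow> bool" where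
  "subharmonic_on G X u \<longleftrightarrow> usc_on X u \<and>
     (\<forall>y\<in>X. \<forall>phi H. C2_test_at phi y H
        \<and> (\<exists>r>0. \<forall>x\<in>ball y r \<inter> X. u x \<le> phi x) \<and> u y = phi y
        \<longrightarrow> H \<in> G)"

definition harmonic_on ::
  "(real^'n^'n) set \<Rightarrow> (real^'n) set \<Rightarrow> (real^'n \<Rightarrow> real) \<Rightarrow> bool" where
  "harmonic_on F X u \<longleftrightarrow> continuous_on X u \<and> subharmonic_on F X u
     \<and> subharmonic_on (dual_subeq F) X (\<lambda>x. - u x)"

definition riesz_kernel :: "real \<Rightarrow> real^'n \<Rightarrow> real" where
  "riesz_kernel p x = (if p = 2 then ln (norm x) else - (1 / (p - 2)) * norm x powr (2 - p))"

text \<open>Orthogonal projection onto the line R e (e a unit vector), and onto e-perp.\<close>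
definition proj_line :: "real^'n \<Rightarrow> real^'n^'n" where
  "proj_line e = (\<chi> i j. e$i * e$j)"

definition proj_perp :: "real^'n \<Rightarrow> real^'n^'n" where
  "proj_perp e = mat 1 - proj_line e"

end

theory Submission imports Defs begin

lemma bl_mv: "bounded_linear (\<lambda>M::real^'n^'m. M *v v)"
proof -
  have "linear (\<lambda>M::real^'n^'m. M *v v)"
    by (rule linearI) (auto simp: matrix_vector_mult_add_rdistrib scaleR_matrix_vector_assoc)
  then show ?thesis by (simp add: linear_conv_bounded_linear)
qed

lemma continuous_on_mv[continuous_intros]:
  "continuous_on S Hf \<Longrightarrow> continuous_on S (\<lambda>x. (Hf x :: real^'n^'m) *v v)"
  using bounded_linear.continuous_on[OF bl_mv] by blast

lemma line_deriv:
  fixes f :: "real^'n \<Rightarrow> real"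
  assumes "(f has_derivative (\<lambda>h. G \<bullet> h)) (at (x + s *\<^sub>R a))"
  shows "((\<lambda>s. f (x + s *\<^sub>R a)) has_real_derivative (G \<bullet> a)) (at s)"
proof -
  have d: "((\<lambda>s. x + s *\<^sub>R a) has_derivative (\<lambda>h. h *\<^sub>R a)) (at s)"
    by (auto intro!: derivative_eq_intros)
  have "((\<lambda>s. f (x + s *\<^sub>R a)) has_derivative (\<lambda>h. G \<bullet> (h *\<^sub>R a))) (at s)"
    using has_derivative_compose[OF d assms] by simp
  moreover have "(\<lambda>h. G \<bullet> (h *\<^sub>R a)) = (*) (G \<bullet> a)" by (auto simp: fun_eq_iff)
  ultimately show ?thesis unfolding has_field_derivative_def by simp
qed

lemma line_deriv2:
  fixes g :: "real^'n \<Rightarrow> real^'n"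
  assumes "(g has_derivative (\<lambda>h. M *v h)) (at (x + s *\<^sub>R b))"
  shows "((\<lambda>s. g (x + s *\<^sub>R b) \<bullet> a) has_real_derivative ((M *v b) \<bullet> a)) (at s)"
proof -
  have d: "((\<lambda>s. x + s *\<^sub>R b) has_derivative (\<lambda>h. h *\<^sub>R b)) (at s)"
    by (auto intro!: derivative_eq_intros)
  have "((\<lambda>s. g (x + s *\<^sub>R b)) has_derivative (\<lambda>h. M *v (h *\<^sub>R b))) (at s)"
    using has_derivative_compose[OF d assms] by simp
  then have "((\<lambda>s. g (x + s *\<^sub>R b) \<bullet> a) has_derivative (\<lambda>h. (M *v (h *\<^sub>R b)) \<bullet> a)) (at s)"
    by (auto intro!: derivative_eq_intros)
  moreover have "(\<lambda>h. (M *v (h *\<^sub>R b)) \<bullet> a) = (*) ((M *v b) \<bullet> a)"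
    by (auto simp: fun_eq_iff matrix_vector_mult_scaleR)
  ultimately show ?thesis unfolding has_field_derivative_def by simp
qed

lemma second_diff:
  fixes f :: "real^'n \<Rightarrow> real"
  assumes D: "\<And>z. z \<in> ball yc r \<Longrightarrow> (f has_derivative (\<lambda>h. g z \<bullet> h)) (at z)
                   \<and> (g has_derivative (\<lambda>h. Hf z *v h)) (at z)"
    and s: "s > 0" and t: "t > 0"
    and B: "\<And>\<sigma> \<tau>. 0 \<le> \<sigma> \<Longrightarrow> \<sigma> \<le> s \<Longrightarrow> 0 \<le> \<tau> \<Longrightarrow> \<tau> \<le> t \<Longrightarrow>
              x + \<sigma> *\<^sub>R a + \<tau> *\<^sub>R b \<in> ball yc r"
  shows "\<exists>\<sigma> \<tau>. 0 < \<sigma> \<and> \<sigma> < s \<and> 0 < \<tau> \<and> \<tau> < t \<and>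
     f (x + s *\<^sub>R a + t *\<^sub>R b) - f (x + s *\<^sub>R a) - f (x + t *\<^sub>R b) + f x
       = s * t * ((Hf (x + \<sigma> *\<^sub>R a + \<tau> *\<^sub>R b) *v b) \<bullet> a)"
proof -
  define k where "k \<sigma> = f ((x + t *\<^sub>R b) + \<sigma> *\<^sub>R a) - f (x + \<sigma> *\<^sub>R a)" for \<sigma>
  have "DERIV k \<sigma> :> (g ((x + t *\<^sub>R b) + \<sigma> *\<^sub>R a) \<bullet> a - g (x + \<sigma> *\<^sub>R a) \<bullet> a)"
    if "0 \<le> \<sigma>" "\<sigma> \<le> s" for \<sigma>
  proof -
    have m1: "(x + t *\<^sub>R b) + \<sigma> *\<^sub>R a \<in> ball yc r"
      using B[OF that order_less_imp_le[OF t] order_refl] by (simp add: algebra_simps)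
    have m2: "x + \<sigma> *\<^sub>R a \<in> ball yc r"
      using B[OF that order_refl order_less_imp_le[OF t]] by simp
    show ?thesis unfolding k_def
      by (intro DERIV_diff line_deriv) (use D m1 m2 in auto)
  qed
  from MVT2[OF s this] obtain \<sigma> where \<sigma>: "0 < \<sigma>" "\<sigma> < s"
    "k s - k 0 = (s - 0) * (g ((x + t *\<^sub>R b) + \<sigma> *\<^sub>R a) \<bullet> a - g (x + \<sigma> *\<^sub>R a) \<bullet> a)"
    by blast
  define m where "m \<tau> = g ((x + \<sigma> *\<^sub>R a) + \<tau> *\<^sub>R b) \<bullet> a" for \<tau>
  have "DERIV m \<tau> :> ((Hf ((x + \<sigma> *\<^sub>R a) + \<tau> *\<^sub>R b) *v b) \<bullet> a)"
    if "0 \<le> \<tau>" "\<tau> \<le> t" for \<tau>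
  proof -
    have "(x + \<sigma> *\<^sub>R a) + \<tau> *\<^sub>R b \<in> ball yc r"
      using B[OF _ _ that, of \<sigma>] \<sigma> by simp
    then show ?thesis unfolding m_def
      by (intro line_deriv2) (use D in auto)
  qed
  from MVT2[OF t this] obtain \<tau> where \<tau>: "0 < \<tau>" "\<tau> < t"
    "m t - m 0 = (t - 0) * ((Hf ((x + \<sigma> *\<^sub>R a) + \<tau> *\<^sub>R b) *v b) \<bullet> a)"
    by blast
  have "f (x + s *\<^sub>R a + t *\<^sub>R b) - f (x + s *\<^sub>R a) - f (x + t *\<^sub>R b) + f x = k s - k 0"
    unfolding k_def by (simp add: algebra_simps)
  also have "\<dots> = s * (m t - m 0)" using \<sigma>(3) unfolding m_def by (simp add: algebra_simps)
  also have "\<dots> = s * t * ((Hf (x + \<sigma> *\<^sub>R a + \<tau> *\<^sub>R b) *v b) \<bullet> a)"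
    using \<tau>(3) by simp
  finally show ?thesis using \<sigma> \<tau> by blast
qed

lemma cont_pair_eq:
  fixes c d :: "'a::metric_space \<Rightarrow> real"
  assumes "continuous_on S c" "continuous_on S d" "y \<in> S"
    and H: "\<And>\<epsilon>. \<epsilon> > 0 \<Longrightarrow> \<exists>\<xi>1\<in>S. \<exists>\<xi>2\<in>S. dist \<xi>1 y < \<epsilon> \<and> dist \<xi>2 y < \<epsilon> \<and> c \<xi>1 = d \<xi>2"
  shows "c y = d y"
proof (rule ccontr)
  assume ne: "c y \<noteq> d y"
  define e where "e = \<bar>c y - d y\<bar> / 2"
  have e: "e > 0" using ne by (simp add: e_def)
  obtain d1 where d1: "d1 > 0" "\<forall>x'\<in>S. dist x' y < d1 \<longrightarrow> dist (c x') (c y) < e"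
    using assms(1) e \<open>y \<in> S\<close> unfolding continuous_on_iff by blast
  obtain d2 where d2: "d2 > 0" "\<forall>x'\<in>S. dist x' y < d2 \<longrightarrow> dist (d x') (d y) < e"
    using assms(2) e \<open>y \<in> S\<close> unfolding continuous_on_iff by blast
  obtain \<xi>1 \<xi>2 where x: "\<xi>1 \<in> S" "\<xi>2 \<in> S" "dist \<xi>1 y < min d1 d2" "dist \<xi>2 y < min d1 d2" "c \<xi>1 = d \<xi>2"
    using H[of "min d1 d2"] d1 d2 by auto
  have "\<bar>c \<xi>1 - c y\<bar> < e" "\<bar>d \<xi>2 - d y\<bar> < e"
    using d1 d2 x by (auto simp: dist_real_def)
  then show False using x(5) by (simp add: e_def abs_if split: if_splits)
qed

lemma cont_nonneg:
  fixes c :: "'a::metric_space \<Rightarrow> real"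
  assumes "continuous_on S c" "y \<in> S"
    and H: "\<And>\<epsilon>. \<epsilon> > 0 \<Longrightarrow> \<exists>\<xi>\<in>S. dist \<xi> y < \<epsilon> \<and> c \<xi> \<ge> 0"
  shows "c y \<ge> 0"
proof (rule ccontr)
  assume ne: "\<not> c y \<ge> 0"
  obtain d1 where d1: "d1 > 0" "\<forall>x'\<in>S. dist x' y < d1 \<longrightarrow> dist (c x') (c y) < - c y"
    using assms(1) ne \<open>y \<in> S\<close> unfolding continuous_on_iff by (meson neg_0_less_iff_less not_le)
  obtain \<xi> where "\<xi> \<in> S" "dist \<xi> y < d1" "c \<xi> \<ge> 0" using H d1 by blast
  then show False using d1 ne by (auto simp: dist_real_def)
qed

lemma norm_two_le:
  fixes a b :: "'a::real_normed_vector"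
  assumes "0 \<le> \<sigma>" "0 \<le> \<tau>"
  shows "norm (\<sigma> *\<^sub>R a + \<tau> *\<^sub>R b) \<le> \<sigma> * norm a + \<tau> * norm b"
  using norm_triangle_ineq[of "\<sigma> *\<^sub>R a" "\<tau> *\<^sub>R b"] assms by simp

lemma hess_sym:
  fixes f :: "real^'n \<Rightarrow> real"
  assumes D: "\<And>z. z \<in> ball y r \<Longrightarrow> (f has_derivative (\<lambda>h. g z \<bullet> h)) (at z)
                   \<and> (g has_derivative (\<lambda>h. Hf z *v h)) (at z)"
    and C: "continuous_on (ball y r) Hf" and r: "r > 0"
  shows "transpose (Hf y) = Hf y"
proof -
  have key: "(Hf y *v axis j 1) \<bullet> axis i 1 = (Hf y *v axis i 1) \<bullet> axis j 1" for i j
  proof (rule cont_pair_eq[where S = "ball y r" and c = "\<lambda>z. (Hf z *v axis j 1) \<bullet> axis i 1"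
      and d = "\<lambda>z. (Hf z *v axis i 1) \<bullet> axis j 1"])
    show "continuous_on (ball y r) (\<lambda>z. (Hf z *v axis j 1) \<bullet> axis i 1)"
      by (intro continuous_on_inner continuous_on_mv C continuous_on_const)
    show "continuous_on (ball y r) (\<lambda>z. (Hf z *v axis i 1) \<bullet> axis j 1)"
      by (intro continuous_on_inner continuous_on_mv C continuous_on_const)
    show "y \<in> ball y r" using r by simp
    fix \<epsilon> :: real assume \<epsilon>: "\<epsilon> > 0"
    define t where "t = min \<epsilon> r / 4"
    have t: "t > 0" "2 * t < \<epsilon>" "2 * t < r" using \<epsilon> r by (auto simp: t_def)
    have B: "y + \<sigma> *\<^sub>R a + \<tau> *\<^sub>R b \<in> ball y r" "dist (y + \<sigma> *\<^sub>R a + \<tau> *\<^sub>R b) y < \<epsilon>"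
      if "0 \<le> \<sigma>" "\<sigma> \<le> t" "0 \<le> \<tau>" "\<tau> \<le> t" "norm a = 1" "norm b = 1" for \<sigma> \<tau> and a b :: "real^'n"
    proof -
      have "norm (\<sigma> *\<^sub>R a + \<tau> *\<^sub>R b) \<le> \<sigma> + \<tau>" using norm_two_le[of \<sigma> \<tau> a b] that by simp
      moreover have "dist (y + \<sigma> *\<^sub>R a + \<tau> *\<^sub>R b) y = norm (\<sigma> *\<^sub>R a + \<tau> *\<^sub>R b)"
        by (simp add: dist_norm add.assoc)
      ultimately show "y + \<sigma> *\<^sub>R a + \<tau> *\<^sub>R b \<in> ball y r" "dist (y + \<sigma> *\<^sub>R a + \<tau> *\<^sub>R b) y < \<epsilon>"
        using that t by (auto simp: dist_commute)
    qed
    obtain \<sigma>1 \<tau>1 where 1: "0 < \<sigma>1" "\<sigma>1 < t" "0 < \<tau>1" "\<tau>1 < t"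
      "f (y + t *\<^sub>R axis i 1 + t *\<^sub>R axis j 1) - f (y + t *\<^sub>R axis i 1) - f (y + t *\<^sub>R axis j 1) + f y
       = t * t * ((Hf (y + \<sigma>1 *\<^sub>R axis i 1 + \<tau>1 *\<^sub>R axis j 1) *v axis j 1) \<bullet> axis i 1)"
      using second_diff[where yc = y and r = r and x = y and a = "axis i 1" and b = "axis j 1", OF D t(1) t(1)] B by auto
    obtain \<sigma>2 \<tau>2 where 2: "0 < \<sigma>2" "\<sigma>2 < t" "0 < \<tau>2" "\<tau>2 < t"
      "f (y + t *\<^sub>R axis j 1 + t *\<^sub>R axis i 1) - f (y + t *\<^sub>R axis j 1) - f (y + t *\<^sub>R axis i 1) + f y
       = t * t * ((Hf (y + \<sigma>2 *\<^sub>R axis j 1 + \<tau>2 *\<^sub>R axis i 1) *v axis i 1) \<bullet> axis j 1)"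
      using second_diff[where yc = y and r = r and x = y and a = "axis j 1" and b = "axis i 1", OF D t(1) t(1)] B by auto
    have "y + t *\<^sub>R axis j 1 + t *\<^sub>R axis i 1 = y + t *\<^sub>R axis i 1 + t *\<^sub>R axis j 1"
      by (simp add: algebra_simps)
    then have "f (y + t *\<^sub>R axis j 1 + t *\<^sub>R axis i 1) = f (y + t *\<^sub>R axis i 1 + t *\<^sub>R axis j 1)"
      by (rule arg_cong)
    then have "t * t * ((Hf (y + \<sigma>1 *\<^sub>R axis i 1 + \<tau>1 *\<^sub>R axis j 1) *v axis j 1) \<bullet> axis i 1)
       = t * t * ((Hf (y + \<sigma>2 *\<^sub>R axis j 1 + \<tau>2 *\<^sub>R axis i 1) *v axis i 1) \<bullet> axis j 1)"
      using 1(5) 2(5) by linarith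
    then have eq: "(Hf (y + \<sigma>1 *\<^sub>R axis i 1 + \<tau>1 *\<^sub>R axis j 1) *v axis j 1) \<bullet> axis i 1
       = (Hf (y + \<sigma>2 *\<^sub>R axis j 1 + \<tau>2 *\<^sub>R axis i 1) *v axis i 1) \<bullet> axis j 1"
      using t(1) by simp
    show "\<exists>\<xi>1\<in>ball y r. \<exists>\<xi>2\<in>ball y r. dist \<xi>1 y < \<epsilon> \<and> dist \<xi>2 y < \<epsilon> \<and>
        (Hf \<xi>1 *v axis j 1) \<bullet> axis i 1 = (Hf \<xi>2 *v axis i 1) \<bullet> axis j 1"
      by (rule bexI[OF bexI[OF _ B(1)[of \<sigma>2 \<tau>2 "axis j 1" "axis i 1"]] B(1)[of \<sigma>1 \<tau>1 "axis i 1" "axis j 1"]])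
         (use eq 1 2 B(2)[of \<sigma>1 \<tau>1 "axis i 1" "axis j 1"] B(2)[of \<sigma>2 \<tau>2 "axis j 1" "axis i 1"] in auto)
  qed
  have "Hf y $ i $ j = Hf y $ j $ i" for i j
    using key[of j i] by (simp add: matrix_vector_mult_basis inner_axis column_def)
  then show ?thesis by (simp add: vec_eq_iff transpose_def)
qed

lemma second_order:
  fixes f :: "real^'n \<Rightarrow> real"
  assumes D: "\<And>z. z \<in> ball y r \<Longrightarrow> (f has_derivative (\<lambda>h. g z \<bullet> h)) (at z)
                   \<and> (g has_derivative (\<lambda>h. Hf z *v h)) (at z)"
    and C: "continuous_on (ball y r) Hf" and r: "r > 0"
    and M: "\<And>x. x \<in> ball y r \<Longrightarrow> f y \<le> f x"
  shows "0 \<le> v \<bullet> (Hf y *v v)"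
proof -
  have "0 \<le> (Hf y *v v) \<bullet> v"
  proof (rule cont_nonneg[where S = "ball y r" and c = "\<lambda>z. (Hf z *v v) \<bullet> v"])
    show "continuous_on (ball y r) (\<lambda>z. (Hf z *v v) \<bullet> v)"
      by (intro continuous_on_inner continuous_on_mv C continuous_on_const)
    show "y \<in> ball y r" using r by simp
    fix \<epsilon> :: real assume \<epsilon>: "\<epsilon> > 0"
    define t where "t = min \<epsilon> r / (norm v + 1) / 2"
    have m: "min \<epsilon> r > 0" using \<epsilon> r by simp
    have nv: "0 < norm v + 1" by (smt (verit) norm_ge_zero)
    have "t * norm v = min \<epsilon> r * (norm v / (norm v + 1)) / 2"
      by (simp add: t_def)
    also have "\<dots> \<le> min \<epsilon> r * 1 / 2"
      by (intro divide_right_mono mult_left_mono) (use m nv in \<open>auto simp: divide_le_eq_1\<close>)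
    also have "\<dots> < min \<epsilon> r" using m by linarith
    finally have tv: "t * norm v < min \<epsilon> r" .
    have t: "t > 0" "t * norm v < \<epsilon>" "t * norm v < r"
      using tv m nv by (auto simp: t_def)
    define x where "x = y - t *\<^sub>R v"
    have B: "x + \<sigma> *\<^sub>R v + \<tau> *\<^sub>R v \<in> ball y r" "dist (x + \<sigma> *\<^sub>R v + \<tau> *\<^sub>R v) y < \<epsilon>"
      if "0 \<le> \<sigma>" "\<sigma> \<le> t" "0 \<le> \<tau>" "\<tau> \<le> t" for \<sigma> \<tau>
    proof -
      have e: "x + \<sigma> *\<^sub>R v + \<tau> *\<^sub>R v - y = (\<sigma> + \<tau> - t) *\<^sub>R v"
        by (simp add: x_def algebra_simps)
      have "\<bar>\<sigma> + \<tau> - t\<bar> * norm v \<le> t * norm v"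
        by (rule mult_right_mono) (use that in auto)
      then show "x + \<sigma> *\<^sub>R v + \<tau> *\<^sub>R v \<in> ball y r" "dist (x + \<sigma> *\<^sub>R v + \<tau> *\<^sub>R v) y < \<epsilon>"
        using t e by (auto simp: dist_norm norm_minus_commute[of y])
    qed
    obtain \<sigma> \<tau> where 1: "0 < \<sigma>" "\<sigma> < t" "0 < \<tau>" "\<tau> < t"
      "f (x + t *\<^sub>R v + t *\<^sub>R v) - f (x + t *\<^sub>R v) - f (x + t *\<^sub>R v) + f x
       = t * t * ((Hf (x + \<sigma> *\<^sub>R v + \<tau> *\<^sub>R v) *v v) \<bullet> v)"
      using second_diff[where yc = y and r = r and x = x and a = v and b = v, OF D t(1) t(1)] B by auto
    have "f y \<le> f (x + t *\<^sub>R v + t *\<^sub>R v)" "f y \<le> f x"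
      using M B(1)[of t t] B(1)[of 0 0] t by auto
    moreover have "x + t *\<^sub>R v = y" by (simp add: x_def)
    ultimately have "0 \<le> t * t * ((Hf (x + \<sigma> *\<^sub>R v + \<tau> *\<^sub>R v) *v v) \<bullet> v)"
      using 1(5) by simp
    then have "0 \<le> (Hf (x + \<sigma> *\<^sub>R v + \<tau> *\<^sub>R v) *v v) \<bullet> v"
      using t(1) by (simp add: zero_le_mult_iff) (smt (verit) mult_pos_pos)
    then show "\<exists>\<xi>\<in>ball y r. dist \<xi> y < \<epsilon> \<and> 0 \<le> (Hf \<xi> *v v) \<bullet> v"
      using B[of \<sigma> \<tau>] 1 by auto
  qed
  then show ?thesis by (simp add: inner_commute)
qed



definition gu :: "real \<Rightarrow> real^'n \<Rightarrow> real^'n" where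
  "gu p x = (x \<bullet> x) powr (-p/2) *\<^sub>R x"

definition outer :: "real^'n \<Rightarrow> real^'n^'n" where
  "outer x = (\<chi> i j. x$i * x$j)"

definition Hu :: "real \<Rightarrow> real^'n \<Rightarrow> real^'n^'n" where
  "Hu p x = (x \<bullet> x) powr (-p/2) *\<^sub>R (mat 1 - (p / (x \<bullet> x)) *\<^sub>R outer x)"

lemma outer_mv: "outer x *v h = (x \<bullet> h) *\<^sub>R x"
  by (simp add: outer_def vec_eq_iff matrix_vector_mult_def inner_vec_def sum_distrib_left
      sum_distrib_right mult_ac)

lemma norm_powr_inner: "norm x powr q = (x \<bullet> x) powr (q/2)"
proof -
  have "norm x = (x \<bullet> x) powr (1/2)"
    by (simp add: norm_eq_sqrt_inner powr_half_sqrt)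
  then show ?thesis by (simp add: powr_powr)
qed

lemma riesz_alt:
  "riesz_kernel p = (\<lambda>y. if p = 2 then ln (y \<bullet> y) / 2 else - (1 / (p - 2)) * (y \<bullet> y) powr ((2 - p)/2))"
proof -
  have "ln (norm y) = ln (y \<bullet> y) / 2" for y :: "real^'a"
  proof (cases "y = 0")
    case False
    then show ?thesis by (simp add: norm_eq_sqrt_inner ln_sqrt)
  qed simp
  then show ?thesis
    by (auto simp: fun_eq_iff riesz_kernel_def norm_powr_inner)
qed

lemma powr_shift: "(N::real) > 0 \<Longrightarrow> N powr ((2 - p)/2) = N powr (-p/2) * N"
proof -
  assume N: "N > 0"
  have e: "(2 - p)/2 = -p/2 + 1" by simp
  have "N powr ((2 - p)/2) = N powr (-p/2 + 1)" by (simp only: e)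
  also have "\<dots> = N powr (-p/2) * N" using N by (simp only: powr_add powr_one)
  finally show ?thesis .
qed

lemma u_deriv:
  fixes x :: "real^'n"
  assumes "x \<noteq> 0"
  shows "(riesz_kernel p has_derivative (\<lambda>h. gu p x \<bullet> h)) (at x)"
proof -
  have N: "x \<bullet> x > 0" using assms by simp
  show ?thesis
  proof (cases "p = 2")
    case True
    have "((\<lambda>y. ln (y \<bullet> y) / 2) has_derivative (\<lambda>h. gu p x \<bullet> h)) (at x)"
      using N True
      by (auto intro!: derivative_eq_intros simp: gu_def powr_minus field_simps inner_commute)
    then show ?thesis using True by (simp add: riesz_alt)
  next
    case False
    have "((\<lambda>y. - (1 / (p - 2)) * (y \<bullet> y) powr ((2 - p)/2)) has_derivative (\<lambda>h. gu p x \<bullet> h)) (at x)"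
      using N False
      apply (auto intro!: derivative_eq_intros simp: gu_def)
      apply (rule ext)
      apply (simp add: powr_shift[OF N] inner_commute field_simps)
      done
    then show ?thesis using False by (simp add: riesz_alt)
  qed
qed

lemma gu_deriv:
  fixes x :: "real^'n"
  assumes "x \<noteq> 0"
  shows "(gu p has_derivative (\<lambda>h. Hu p x *v h)) (at x)"
proof -
  have N: "x \<bullet> x > 0" using assms by simp
  have "((\<lambda>y. (y \<bullet> y) powr (-p/2) *\<^sub>R y) has_derivative (\<lambda>h. Hu p x *v h)) (at x)"
    using N
    apply (auto intro!: derivative_eq_intros)
    apply (rule ext)
    apply (simp add: Hu_def outer_mv algebra_simps scaleR_matrix_vector_assoc[symmetric] inner_commute)
    done
  then show ?thesis by (simp add: gu_def[abs_def])
qed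

lemma Hu_cont: "continuous_on (- {0}) (Hu p :: real^'n \<Rightarrow> real^'n^'n)"
  unfolding Hu_def[abs_def] outer_def
  by (intro continuous_intros) auto



lemma Hu_formula:
  fixes y :: "real^'n"
  assumes "y \<noteq> 0"
  shows "Hu p y = norm y powr (-p) *\<^sub>R
     (proj_perp ((1 / norm y) *\<^sub>R y) - (p - 1) *\<^sub>R proj_line ((1 / norm y) *\<^sub>R y))"
proof -
  have N: "y \<bullet> y = (norm y)^2" by (simp add: power2_norm_eq_inner)
  have n: "norm y > 0" using assms by simp
  have P: "(y \<bullet> y) powr (-p/2) = norm y powr (-p)" by (simp add: norm_powr_inner)
  have "Hu p y = norm y powr (-p) *\<^sub>R (mat 1 - (p / (norm y)^2) *\<^sub>R outer y)"
    unfolding Hu_def P by (simp only: N)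
  also have "\<dots> = norm y powr (-p) *\<^sub>R
     (proj_perp ((1 / norm y) *\<^sub>R y) - (p - 1) *\<^sub>R proj_line ((1 / norm y) *\<^sub>R y))"
    unfolding proj_perp_def proj_line_def outer_def
    using n by (simp add: vec_eq_iff mat_def field_simps power2_eq_square)
  finally show ?thesis .
qed

lemma Hu_unit:
  fixes e :: "real^'n"
  assumes "norm e = 1"
  shows "Hu p e = proj_perp e - (p - 1) *\<^sub>R proj_line e"
proof -
  have "e \<noteq> 0" using assms by auto
  then show ?thesis using Hu_formula[of e p] assms by simp
qed

lemma Sym_add: "A \<in> Sym \<Longrightarrow> B \<in> Sym \<Longrightarrow> A + B \<in> Sym"
  by (auto simp: Sym_def vec_eq_iff transpose_def)
lemma Sym_diff: "A \<in> Sym \<Longrightarrow> B \<in> Sym \<Longrightarrow> A - B \<in> Sym"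
  by (auto simp: Sym_def vec_eq_iff transpose_def)
lemma Sym_uminus: "A \<in> Sym \<Longrightarrow> - A \<in> Sym"
  by (auto simp: Sym_def vec_eq_iff transpose_def)
lemma Sym_scale: "A \<in> Sym \<Longrightarrow> t *\<^sub>R A \<in> Sym"
  by (auto simp: Sym_def vec_eq_iff transpose_def)

lemma cone_scale:
  assumes "cone_subequation F" "t > 0"
  shows "t *\<^sub>R A \<in> F \<longleftrightarrow> A \<in> F"
proof
  assume "A \<in> F"
  then show "t *\<^sub>R A \<in> F" using assms unfolding cone_subequation_def by blast
next
  assume "t *\<^sub>R A \<in> F"
  moreover have "(\<lambda>A. (1/t) *\<^sub>R A) ` F = F" using assms unfolding cone_subequation_def by auto
  ultimately have "(1/t) *\<^sub>R (t *\<^sub>R A) \<in> F" by blast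
  then show "A \<in> F" using assms by simp
qed

lemma int_iff:
  "A \<in> (top_of_set Sym) interior_of F \<longleftrightarrow> (\<exists>U. open U \<and> A \<in> Sym \<and> A \<in> U \<and> Sym \<inter> U \<subseteq> F)"
  unfolding interior_of_def openin_open by auto

lemma int_scale:
  assumes "cone_subequation F" "t > 0" "A \<in> (top_of_set Sym) interior_of F"
  shows "t *\<^sub>R A \<in> (top_of_set Sym) interior_of F"
proof -
  obtain U where U: "open U" "A \<in> Sym" "A \<in> U" "Sym \<inter> U \<subseteq> F" using assms(3) int_iff by metis
  have "open ((\<lambda>B. t *\<^sub>R B) ` U)" using U(1) assms(2) by (intro open_scaling) auto
  moreover have "Sym \<inter> (\<lambda>B. t *\<^sub>R B) ` U \<subseteq> F"
  proof
    fix z assume z: "z \<in> Sym \<inter> (\<lambda>B. t *\<^sub>R B) ` U"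
    then obtain w where w: "w \<in> U" "z = t *\<^sub>R w" by auto
    have "w = (1/t) *\<^sub>R z" using w assms(2) by simp
    then have "w \<in> Sym" using z Sym_scale by auto
    then have "w \<in> F" using U w by auto
    then show "z \<in> F" using cone_scale[OF assms(1,2)] w by simp
  qed
  ultimately show ?thesis using U int_iff Sym_scale by blast
qed

lemma int_scale_iff:
  assumes "cone_subequation F" "t > 0"
  shows "t *\<^sub>R A \<in> (top_of_set Sym) interior_of F \<longleftrightarrow> A \<in> (top_of_set Sym) interior_of F"
  using int_scale[OF assms] int_scale[OF assms(1), of "1/t" "t *\<^sub>R A"] assms(2) by auto

lemma int_psd:
  assumes "cone_subequation F" "A \<in> (top_of_set Sym) interior_of F" "psd P"
  shows "A + P \<in> (top_of_set Sym) interior_of F"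
proof -
  obtain U where U: "open U" "A \<in> Sym" "A \<in> U" "Sym \<inter> U \<subseteq> F" using assms(2) int_iff by metis
  have P: "P \<in> Sym" using assms(3) psd_def by blast
  have "open ((+) P ` U)" using U(1) by (rule open_translation)
  moreover have "Sym \<inter> (+) P ` U \<subseteq> F"
  proof
    fix z assume z: "z \<in> Sym \<inter> (+) P ` U"
    then obtain w where w: "w \<in> U" "z = P + w" by auto
    have "w = z - P" using w by simp
    then have "w \<in> Sym" using z P Sym_diff by auto
    then have "w \<in> F" using U w by auto
    then have "w + P \<in> F" using assms(1,3) unfolding cone_subequation_def by blast
    then show "z \<in> F" using w by (simp add: add.commute)
  qed
  moreover have "A + P \<in> (+) P ` U" using U by (auto simp: add.commute)
  ultimately show ?thesis using U int_iff Sym_add P by blast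
qed

lemma frontier_iff:
  assumes "cone_subequation F"
  shows "A \<in> (top_of_set Sym) frontier_of F \<longleftrightarrow> A \<in> F \<and> A \<notin> (top_of_set Sym) interior_of F"
proof -
  have "closedin (top_of_set Sym) F"
    using assms unfolding cone_subequation_def by (intro closed_subset) auto
  then have "(top_of_set Sym) closure_of F = F" by (rule closure_of_closedin)
  then show ?thesis by (simp add: frontier_of_def)
qed



lemma mv_uminus: "(- A) *v h = - (A *v h)" for A :: "real^'n^'m"
  by (simp add: vec_eq_iff matrix_vector_mult_def sum_negf)

lemma mv_diff: "(A - B) *v h = A *v h - B *v h" for A :: "real^'n^'m"
  by (simp add: matrix_vector_mult_diff_rdistrib)

lemma touch:
  fixes w phi :: "real^'n \<Rightarrow> real"
  assumes wD: "\<And>z. z \<in> ball y R \<Longrightarrow> (w has_derivative (\<lambda>h. gw z \<bullet> h)) (at z)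
                   \<and> (gw has_derivative (\<lambda>h. Hw z *v h)) (at z)"
    and wC: "continuous_on (ball y R) Hw" and R: "R > 0"
    and T: "C2_test_at phi y H" and le: "\<exists>r>0. \<forall>x\<in>ball y r \<inter> X. w x \<le> phi x"
    and eq: "w y = phi y" and sub: "ball y R \<subseteq> X"
  shows "H \<in> Sym \<and> psd (H - Hw y)"
proof -
  obtain r1 g Hf where r1: "r1 > 0"
    and D1: "\<And>x. x \<in> ball y r1 \<Longrightarrow> (phi has_derivative (\<lambda>h. g x \<bullet> h)) (at x)
                   \<and> (g has_derivative (\<lambda>h. Hf x *v h)) (at x)"
    and C1: "continuous_on (ball y r1) Hf" and H: "H = Hf y"
    using T unfolding C2_test_at_def by blast
  obtain r where r: "r > 0" "\<forall>x\<in>ball y r \<inter> X. w x \<le> phi x" using le by blast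
  have symH: "transpose H = H" using hess_sym[OF D1 C1 r1] H by simp
  have symW: "transpose (Hw y) = Hw y" using hess_sym[OF wD wC R] by simp
  define \<rho> where "\<rho> = min r1 (min r R)"
  have \<rho>: "\<rho> > 0" using r1 r R by (simp add: \<rho>_def)
  have bs: "ball y \<rho> \<subseteq> ball y r1" "ball y \<rho> \<subseteq> ball y r" "ball y \<rho> \<subseteq> ball y R"
    by (auto simp: \<rho>_def)
  have "0 \<le> v \<bullet> ((Hf y - Hw y) *v v)" for v
  proof (rule second_order[where f = "\<lambda>x. phi x - w x" and g = "\<lambda>x. g x - gw x"
        and Hf = "\<lambda>x. Hf x - Hw x" and r = \<rho>])
    fix z assume z: "z \<in> ball y \<rho>"
    then have z1: "z \<in> ball y r1" and z2: "z \<in> ball y R" using bs by auto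
    have "((\<lambda>x. phi x - w x) has_derivative (\<lambda>h. g z \<bullet> h - gw z \<bullet> h)) (at z)"
      using D1[OF z1] wD[OF z2] by (intro has_derivative_diff) auto
    moreover have "((\<lambda>x. g x - gw x) has_derivative (\<lambda>h. Hf z *v h - Hw z *v h)) (at z)"
      using D1[OF z1] wD[OF z2] by (intro has_derivative_diff) auto
    ultimately show "((\<lambda>x. phi x - w x) has_derivative (\<lambda>h. (g z - gw z) \<bullet> h)) (at z) \<and>
        ((\<lambda>x. g x - gw x) has_derivative (\<lambda>h. (Hf z - Hw z) *v h)) (at z)"
      by (simp add: inner_diff_left mv_diff)
  next
    show "continuous_on (ball y \<rho>) (\<lambda>x. Hf x - Hw x)"
      using continuous_on_subset[OF C1 bs(1)] continuous_on_subset[OF wC bs(3)]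
      by (intro continuous_on_diff)
  next
    show "\<rho> > 0" by (rule \<rho>)
  next
    fix x assume "x \<in> ball y \<rho>"
    then have "x \<in> ball y r \<inter> X" using bs sub by auto
    then show "phi y - w y \<le> phi x - w x" using r eq by auto
  qed
  then have q: "0 \<le> v \<bullet> ((H - Hw y) *v v)" for v using H by simp
  have "H \<in> Sym" using symH by (simp add: Sym_def)
  moreover have "H - Hw y \<in> Sym" using symH symW Sym_diff[of H "Hw y"] by (simp add: Sym_def)
  ultimately show ?thesis using q by (simp add: psd_def)
qed



lemma usc_of_cont: "continuous_on X v \<Longrightarrow> usc_on X v"
  unfolding usc_on_def continuous_on_def by (auto intro: order_tendstoD(2))

lemma uD:
  fixes y :: "real^'n"
  assumes "y \<noteq> 0"
  shows "\<And>z. z \<in> ball y (norm y) \<Longrightarrow> (riesz_kernel p has_derivative (\<lambda>h. gu p z \<bullet> h)) (at z)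
                   \<and> (gu p has_derivative (\<lambda>h. Hu p z *v h)) (at z)"
    and "continuous_on (ball y (norm y)) (Hu p)"
    and "ball y (norm y) \<subseteq> - {0}"
proof -
  show sub: "ball y (norm y) \<subseteq> - {0}" by (auto simp: dist_norm)
  fix z assume "z \<in> ball y (norm y)"
  then have "z \<noteq> 0" using sub by auto
  then show "(riesz_kernel p has_derivative (\<lambda>h. gu p z \<bullet> h)) (at z)
                   \<and> (gu p has_derivative (\<lambda>h. Hu p z *v h)) (at z)"
    using u_deriv gu_deriv by blast
next
  show "continuous_on (ball y (norm y)) (Hu p)"
    using Hu_cont by (rule continuous_on_subset) (auto simp: dist_norm)
qed

lemma nuD:
  fixes y :: "real^'n"
  assumes "y \<noteq> 0"
  shows "\<And>z. z \<in> ball y (norm y) \<Longrightarrow> ((\<lambda>x. - riesz_kernel p x) has_derivative (\<lambda>h. (- gu p z) \<bullet> h)) (at z)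
                   \<and> ((\<lambda>x. - gu p x) has_derivative (\<lambda>h. (- Hu p z) *v h)) (at z)"
    and "continuous_on (ball y (norm y)) (\<lambda>x. - Hu p x)"
proof -
  fix z assume z: "z \<in> ball y (norm y)"
  have "((\<lambda>x. - riesz_kernel p x) has_derivative (\<lambda>h. - (gu p z \<bullet> h))) (at z)"
    using uD(1)[OF assms z] by (intro has_derivative_minus) auto
  moreover have "((\<lambda>x. - gu p x) has_derivative (\<lambda>h. - (Hu p z *v h))) (at z)"
    using uD(1)[OF assms z] by (intro has_derivative_minus) auto
  ultimately show "((\<lambda>x. - riesz_kernel p x) has_derivative (\<lambda>h. (- gu p z) \<bullet> h)) (at z)
                   \<and> ((\<lambda>x. - gu p x) has_derivative (\<lambda>h. (- Hu p z) *v h)) (at z)"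
    by (simp add: mv_uminus)
next
  show "continuous_on (ball y (norm y)) (\<lambda>x. - Hu p x)"
    using uD(2)[OF assms] by (intro continuous_on_minus)
qed

lemma u_cont: "continuous_on (- {0}) (riesz_kernel p :: real^'n \<Rightarrow> real)"
  by (rule continuous_at_imp_continuous_on) (auto intro: has_derivative_continuous[OF u_deriv])

lemma u_test:
  fixes y :: "real^'n"
  assumes "y \<noteq> 0"
  shows "C2_test_at (riesz_kernel p) y (Hu p y)" "C2_test_at (\<lambda>x. - riesz_kernel p x) y (- Hu p y)"
proof -
  have n: "norm y > 0" using assms by simp
  show "C2_test_at (riesz_kernel p) y (Hu p y)"
    unfolding C2_test_at_def
    by (intro exI[where x = "norm y"] exI[where x = "gu p"] exI[where x = "Hu p"] conjI n ballI)
       (use uD[OF assms] in auto)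
  show "C2_test_at (\<lambda>x. - riesz_kernel p x) y (- Hu p y)"
    unfolding C2_test_at_def
    by (intro exI[where x = "norm y"] exI[where x = "\<lambda>x. - gu p x"] exI[where x = "\<lambda>x. - Hu p x"] conjI n ballI)
       (use nuD[OF assms] in fast)+
qed

theorem proposition3p1:
  fixes F :: "(real^'n^'n) set" and p :: real
  assumes "cone_subequation F" and "p \<ge> 1"
  shows "harmonic_on F (- {0}) (riesz_kernel p) \<longleftrightarrow>
    (\<forall>e::real^'n. norm e = 1 \<longrightarrow>
       proj_perp e - (p - 1) *\<^sub>R proj_line e \<in> (top_of_set Sym) frontier_of F)"
proof
  assume h: "harmonic_on F (- {0}) (riesz_kernel p)"
  show "\<forall>e::real^'n. norm e = 1 \<longrightarrow>
       proj_perp e - (p - 1) *\<^sub>R proj_line e \<in> (top_of_set Sym) frontier_of F"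
  proof (intro allI impI)
    fix e :: "real^'n" assume e: "norm e = 1"
    then have e0: "e \<noteq> 0" by auto
    have "Hu p e \<in> F"
      using h u_test(1)[OF e0] e0 unfolding harmonic_on_def subharmonic_on_def
      by (metis ComplI dist_self order_refl zero_less_one singletonD)
    moreover have "- Hu p e \<in> dual_subeq F"
      using h u_test(2)[OF e0] e0 unfolding harmonic_on_def subharmonic_on_def
      by (metis ComplI dist_self order_refl zero_less_one singletonD)
    then have "Hu p e \<notin> (top_of_set Sym) interior_of F"
      by (simp add: dual_subeq_def)
    ultimately show "proj_perp e - (p - 1) *\<^sub>R proj_line e \<in> (top_of_set Sym) frontier_of F"
      using frontier_iff[OF assms(1)] Hu_unit[OF e] by simp
  qed
next
  assume A: "\<forall>e::real^'n. norm e = 1 \<longrightarrow>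
       proj_perp e - (p - 1) *\<^sub>R proj_line e \<in> (top_of_set Sym) frontier_of F"
  have HF: "Hu p y \<in> F \<and> Hu p y \<notin> (top_of_set Sym) interior_of F" if y: "y \<noteq> 0" for y :: "real^'n"
  proof -
    define e where "e = (1 / norm y) *\<^sub>R y"
    have e: "norm e = 1" using y by (simp add: e_def)
    have c: "norm y powr (-p) > 0" using y by simp
    have "Hu p e \<in> F \<and> Hu p e \<notin> (top_of_set Sym) interior_of F"
      using A e frontier_iff[OF assms(1)] Hu_unit[OF e] by simp
    moreover have "Hu p y = norm y powr (-p) *\<^sub>R Hu p e"
      using Hu_formula[OF y] Hu_unit[OF e] by (simp add: e_def)
    ultimately show ?thesis
      using cone_scale[OF assms(1) c] int_scale_iff[OF assms(1) c] by simp
  qed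
  show "harmonic_on F (- {0}) (riesz_kernel p)"
    unfolding harmonic_on_def subharmonic_on_def
  proof (intro conjI ballI allI impI)
    show "continuous_on (- {0}) (riesz_kernel p)" by (rule u_cont)
    show "usc_on (- {0}) (riesz_kernel p)" by (rule usc_of_cont u_cont)+
    show "usc_on (- {0}) (\<lambda>x. - riesz_kernel p x)" by (intro usc_of_cont continuous_on_minus u_cont)
  next
    fix y :: "real^'n" and phi H
    assume y: "y \<in> - {0}"
      and T: "C2_test_at phi y H \<and> (\<exists>r>0. \<forall>x\<in>ball y r \<inter> - {0}. riesz_kernel p x \<le> phi x)
        \<and> riesz_kernel p y = phi y"
    have y0: "y \<noteq> 0" using y by simp
    have "H \<in> Sym \<and> psd (H - Hu p y)"
      by (rule touch[where X = "-{0}", OF uD(1)[OF y0] uD(2)[OF y0]]) (use T y0 uD(3)[OF y0] in auto)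
    then have "Hu p y + (H - Hu p y) \<in> F"
      using HF[OF y0] assms(1) unfolding cone_subequation_def by blast
    then show "H \<in> F" by simp
  next
    fix y :: "real^'n" and phi H
    assume y: "y \<in> - {0}"
      and T: "C2_test_at phi y H \<and> (\<exists>r>0. \<forall>x\<in>ball y r \<inter> - {0}. - riesz_kernel p x \<le> phi x)
        \<and> - riesz_kernel p y = phi y"
    have y0: "y \<noteq> 0" using y by simp
    have P: "H \<in> Sym \<and> psd (H - - Hu p y)"
      by (rule touch[where X = "-{0}", OF nuD(1)[OF y0] nuD(2)[OF y0]]) (use T y0 uD(3)[OF y0] in auto)
    show "H \<in> dual_subeq F"
      unfolding dual_subeq_def
    proof (intro CollectI conjI notI)
      show "H \<in> Sym" using P by simp
      assume "- H \<in> (top_of_set Sym) interior_of F"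
      then have "- H + (H - - Hu p y) \<in> (top_of_set Sym) interior_of F"
        using int_psd[OF assms(1)] P by blast
      then show False using HF[OF y0] by simp
    qed
  qed
qed


end
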